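(* For any $\beta\in(0,\infty)$ and $\bar\beta\in(0,\infty)^k$, $$d_{TV}(W,T)=\int_0^1\mathbb{P}\Big(F_N(\beta)<\frac{\log x}{N}\Big)dx\quad\text{and}\quad d_{TV}(W,T_k)=\int_0^1\mathbb{P}\Big(F_N(\bar\beta)<\frac{\log x}{N}\Big)dx.$$
   Context: Let $p\ge2$, $N\ge1$. $Y$ is a random $p$-tensor of size $N^p$ with i.i.d. standard Gaussian entries and $W=\frac1{p!}\sum_\pi Y^\pi$ (sum over permutations of $\{1,\dots,p\}$, $Y^\pi_{i_1,\dots,i_p}=Y_{i_{\pi(1)},\dots,i_{\pi(p)}}$). For $1\le r\le k$, $\mu_r$ is a probability measure on a bounded Borel set $\Lambda_r\subset\mathbb{R}$; $u(1),\dots,u(k)\in\mathbb{R}^N$ are independent of each other and of $W$, $u(r)$ with i.i.d. entries of law $\mu_r$; $\mu=\mu_1$, $u=u(1)$. $T=W+\beta N^{-(p-1)/2}u^{\otimes p}$ and $T_k=W+N^{-(p-1)/2}\sum_r\beta_ru(r)^{\otimes p}$, where $(u^{\otimes p})_{i_1,\dots,i_p}=u_{i_1}\cdots u_{i_p}$. $d_{TV}(U,V)=\sup_A|\mathbb{P}(U\in A)-\mathbb{P}(V\in A)|$ over the Borel $\sigma$-algebra generated by symmetric $p$-tensors. With $X_N(\sigma)=N^{-(p-1)/2}\sum Y_{i_1,\dots,i_p}\sigma_{i_1}\cdots\sigma_{i_p}$ and $R(\sigma,\sigma')=\frac1N\sum_i\sigma_i\sigma'_i$: $F_N(\beta)=\frac1N\log\int\exp(\beta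 X_N(\sigma)-\frac{\beta^2N}{2}R(\sigma,\sigma)^p)\mu^{\otimes N}(d\sigma)$ and $F_N(\bar\beta)=\frac1N\log\int\exp\big(\sum_r\beta_rX_N(\sigma(r))-\sum_{r,r'}\frac{\beta_r\beta_{r'}}{2}NR(\sigma(r),\sigma(r'))^p\big)\bar\mu^{\otimes N}(d\bar\sigma)$, where $\bar\mu=\mu_1\otimes\cdots\otimes\mu_k$ and $\bar\sigma$ has rows $\sigma(r)\in\Lambda_r^N$. *)

theory Defs
  imports "HOL-Probability.Probability" "HOL-Combinatorics.Permutations"
begin

definition tidx :: "nat \<Rightarrow> nat \<Rightarrow> nat list set" where
  "tidx N p = {is. length is = p \<and> set is \<subseteq> {..<N}}"

definition tensor_space :: "nat \<Rightarrow> nat \<Rightarrow> (nat list \<Rightarrow> real) measure" where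
  "tensor_space N p = PiM (tidx N p) (\<lambda>_. borel)"

definition std_gauss :: "real measure" where
  "std_gauss = density lborel (\<lambda>x. ennreal (std_normal_density x))"

definition gauss_tensor :: "nat \<Rightarrow> nat \<Rightarrow> (nat list \<Rightarrow> real) measure" where
  "gauss_tensor N p = PiM (tidx N p) (\<lambda>_. std_gauss)"

definition symmetrize :: "nat \<Rightarrow> nat \<Rightarrow> (nat list \<Rightarrow> real) \<Rightarrow> (nat list \<Rightarrow> real)" where
  "symmetrize N p Y = restrict (\<lambda>is. (1 / fact p) *
      (\<Sum>\<pi>\<in>{\<pi>. \<pi> permutes {..<p}}. Y (permute_list \<pi> is))) (tidx N p)"

definition tensor_power :: "nat \<Rightarrow> nat \<Rightarrow> (nat \<Rightarrow> real) \<Rightarrow> (nat list \<Rightarrow> real)" where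
  "tensor_power N p u = restrict (\<lambda>is. prod_list (map u is)) (tidx N p)"

definition XN :: "nat \<Rightarrow> nat \<Rightarrow> (nat list \<Rightarrow> real) \<Rightarrow> (nat \<Rightarrow> real) \<Rightarrow> real" where
  "XN N p Y \<sigma> = real N powr (- (real p - 1) / 2) * (\<Sum>is\<in>tidx N p. Y is * prod_list (map \<sigma> is))"

definition overlap :: "nat \<Rightarrow> (nat \<Rightarrow> real) \<Rightarrow> (nat \<Rightarrow> real) \<Rightarrow> real" where
  "overlap N \<sigma> \<sigma>' = (1 / real N) * (\<Sum>i<N. \<sigma> i * \<sigma>' i)"

definition free_energy :: "nat \<Rightarrow> nat \<Rightarrow> real measure \<Rightarrow> real \<Rightarrow> (nat list \<Rightarrow> real) \<Rightarrow> real" where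
  "free_energy N p \<mu> \<beta> Y = (1 / real N) * ln (\<integral>\<sigma>. exp (\<beta> * XN N p Y \<sigma>
      - \<beta>\<^sup>2 * real N / 2 * overlap N \<sigma> \<sigma> ^ p) \<partial>(PiM {..<N} (\<lambda>_. \<mu>)))"

text \<open>F_N(bar beta), as a function of Y; rows sigma(r), r = 0..k-1 (0-indexed).\<close>
definition free_energy_multi :: "nat \<Rightarrow> nat \<Rightarrow> nat \<Rightarrow> (nat \<Rightarrow> real measure) \<Rightarrow> (nat \<Rightarrow> real)
    \<Rightarrow> (nat list \<Rightarrow> real) \<Rightarrow> real" where
  "free_energy_multi N p k \<mu>s \<beta>s Y = (1 / real N) * ln (\<integral>\<sigma>s. exp (
      (\<Sum>r<k. \<beta>s r * XN N p Y (\<sigma>s r))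
      - (\<Sum>r<k. \<Sum>r'<k. \<beta>s r * \<beta>s r' / 2 * real N * overlap N (\<sigma>s r) (\<sigma>s r') ^ p))
      \<partial>(PiM {..<k} (\<lambda>r. PiM {..<N} (\<lambda>_. \<mu>s r))))"

definition dTV :: "'a measure \<Rightarrow> 'a measure \<Rightarrow> real" where
  "dTV P Q = (SUP A\<in>sets P. \<bar>measure P A - measure Q A\<bar>)"

end

theory Submission
  imports Defs
begin

lemma std_gauss_prob: "prob_space std_gauss"
  unfolding std_gauss_def by (rule prob_space_normal_density) simp

lemma sets_std_gauss[simp, measurable_cong]: "sets std_gauss = sets borel"
  unfolding std_gauss_def by simp

lemma space_std_gauss[simp]: "space std_gauss = UNIV"
  unfolding std_gauss_def by simp

lemma std_dens_shift: "std_normal_density (x - c) = std_normal_density x * exp (x*c - c\<^sup>2/2)"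
  unfolding std_normal_density_def
  apply (simp add: mult_exp_exp)
  by (simp add: field_simps power2_eq_square)

lemma gauss_shift1:
  "distr std_gauss borel (\<lambda>x. x + c) = density std_gauss (\<lambda>x. ennreal (exp (x*c - c\<^sup>2/2)))"
proof (rule measure_eqI)
  fix A assume A: "A \<in> sets (distr std_gauss borel (\<lambda>x. x + c))"
  then have [measurable]: "A \<in> sets borel" by simp
  have [measurable]: "(\<lambda>x. x + c) -` A \<in> sets borel"
    using measurable_sets_borel[of "\<lambda>x. x+c" borel A] by auto
  have "emeasure (distr std_gauss borel (\<lambda>x. x + c)) A = emeasure std_gauss ((\<lambda>x. x + c) -` A)"
    by (subst emeasure_distr) auto
  also have "\<dots> = (\<integral>\<^sup>+x. ennreal (std_normal_density x) * indicator A (x + c) \<partial>lborel)"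
    unfolding std_gauss_def
    by (subst emeasure_density) (auto intro!: nn_integral_cong split: split_indicator)
  also have "\<dots> = (\<integral>\<^sup>+x. ennreal (std_normal_density (-c + 1 * x)) * indicator A (-c + 1 * x + c) \<partial>lborel)"
    by (subst nn_integral_real_affine[where c=1 and t="-c"]) auto
  also have "\<dots> = (\<integral>\<^sup>+x. ennreal (std_normal_density x) * (ennreal (exp (x*c - c\<^sup>2/2)) * indicator A x) \<partial>lborel)"
    by (intro nn_integral_cong) (simp add: std_dens_shift ennreal_mult' mult.assoc)
  also have "\<dots> = emeasure (density std_gauss (\<lambda>x. ennreal (exp (x*c - c\<^sup>2/2)))) A"
    unfolding std_gauss_def
    by (subst emeasure_density) (auto simp: nn_integral_density)
  finally show "emeasure (distr std_gauss borel (\<lambda>x. x + c)) A = emeasure (density std_gauss (\<lambda>x. ennreal (exp (x*c - c\<^sup>2/2)))) A" .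
qed simp

lemma indicator_PiE_prod:
  assumes "finite I" "Y \<in> extensional I"
  shows "indicator (Pi\<^sub>E I A) Y = (\<Prod>i\<in>I. indicator (A i) (Y i) :: 'b::comm_semiring_1)"
proof (cases "Y \<in> Pi\<^sub>E I A")
  case True then show ?thesis by (auto simp: PiE_def Pi_def indicator_def intro!: prod.neutral[symmetric])
next
  case False
  with assms obtain i where "i \<in> I" "Y i \<notin> A i" by (auto simp: PiE_def Pi_def)
  then have "(\<Prod>i\<in>I. indicator (A i) (Y i) :: 'b) = 0"
    using assms by (intro prod_zero) (auto intro!: bexI[of _ i])
  with False show ?thesis by simp
qed

lemma gauss_shift_prod:
  assumes fin: "finite I"
  shows "distr (PiM I (\<lambda>_. std_gauss)) (PiM I (\<lambda>_. borel)) (\<lambda>Y. restrict (\<lambda>i. Y i + c i) I)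
       = density (PiM I (\<lambda>_. std_gauss)) (\<lambda>Y. ennreal (exp ((\<Sum>i\<in>I. Y i * c i) - (\<Sum>i\<in>I. (c i)\<^sup>2)/2)))"
    (is "?L = ?R")
proof -
  interpret G: product_prob_space "\<lambda>_. std_gauss"
    by (intro product_prob_spaceI std_gauss_prob)
  define M where "M = (\<lambda>i. distr std_gauss borel (\<lambda>x. x + c i))"
  interpret MM: product_prob_space M
    unfolding M_def by (intro product_prob_spaceI prob_space.prob_space_distr std_gauss_prob) auto
  have setsM: "sets (M i) = sets borel" for i unfolding M_def by simp
  have PiMeq: "sets (PiM I M) = sets (PiM I (\<lambda>_. borel))"
    by (intro sets_PiM_cong) (auto simp: setsM)
  have PiMeq2: "sets (PiM I (\<lambda>_. std_gauss)) = sets (PiM I (\<lambda>_. borel))"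
    by (intro sets_PiM_cong) auto
  have L: "?L = PiM I M"
  proof (rule MM.PiM_eqI[OF fin])
    show "sets ?L = sets (PiM I M)" using PiMeq by simp
    fix A assume A: "\<And>i. i \<in> I \<Longrightarrow> A i \<in> sets (M i)"
    have mb: "(\<lambda>Y. restrict (\<lambda>i. Y i + c i) I) \<in> PiM I (\<lambda>_. std_gauss) \<rightarrow>\<^sub>M PiM I (\<lambda>_. borel)"
      by (rule measurable_restrict) (auto simp: measurable_cong_sets[OF sets_std_gauss refl])
    have "emeasure ?L (Pi\<^sub>E I A) = emeasure (PiM I (\<lambda>_. std_gauss)) ((\<lambda>Y. restrict (\<lambda>i. Y i + c i) I) -` Pi\<^sub>E I A \<inter> space (PiM I (\<lambda>_. std_gauss)))"
      using A by (intro emeasure_distr mb) (auto simp: PiMeq[symmetric] intro!: sets_PiM_I_finite fin)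
    also have "(\<lambda>Y. restrict (\<lambda>i. Y i + c i) I) -` Pi\<^sub>E I A \<inter> space (PiM I (\<lambda>_. std_gauss)) = Pi\<^sub>E I (\<lambda>i. (\<lambda>x. x + c i) -` A i)"
      by (auto simp: space_PiM PiE_def Pi_def extensional_def)
    also have "emeasure (PiM I (\<lambda>_. std_gauss)) (Pi\<^sub>E I (\<lambda>i. (\<lambda>x. x + c i) -` A i)) = (\<Prod>i\<in>I. emeasure std_gauss ((\<lambda>x. x + c i) -` A i))"
      using A by (intro G.emeasure_PiM fin) (auto simp: setsM intro: measurable_sets_borel[of _ borel])
    also have "\<dots> = (\<Prod>i\<in>I. emeasure (M i) (A i))"
      using A unfolding M_def by (intro prod.cong refl) (auto simp: emeasure_distr)
    finally show "emeasure ?L (Pi\<^sub>E I A) = (\<Prod>i\<in>I. emeasure (M i) (A i))" .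
  qed
  have R: "?R = PiM I M"
  proof (rule MM.PiM_eqI[OF fin])
    show "sets ?R = sets (PiM I M)" using PiMeq PiMeq2 by simp
    fix A assume A: "\<And>i. i \<in> I \<Longrightarrow> A i \<in> sets (M i)"
    have AB[measurable]: "i \<in> I \<Longrightarrow> A i \<in> sets borel" for i using A setsM by auto
    have "emeasure ?R (Pi\<^sub>E I A) = (\<integral>\<^sup>+Y. ennreal (exp ((\<Sum>i\<in>I. Y i * c i) - (\<Sum>i\<in>I. (c i)\<^sup>2)/2)) * indicator (Pi\<^sub>E I A) Y \<partial>PiM I (\<lambda>_. std_gauss))"
      using A by (intro emeasure_density) (auto simp: PiMeq2 PiMeq[symmetric] intro!: sets_PiM_I_finite fin)
    also have "\<dots> = (\<integral>\<^sup>+Y. (\<Prod>i\<in>I. ennreal (exp (Y i * c i - (c i)\<^sup>2/2)) * indicator (A i) (Y i)) \<partial>PiM I (\<lambda>_. std_gauss))"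
    proof (intro nn_integral_cong)
      fix Y assume "Y \<in> space (PiM I (\<lambda>_. std_gauss))"
      then have "Y \<in> extensional I" by (auto simp: space_PiM PiE_def)
      then have "indicator (Pi\<^sub>E I A) Y = (\<Prod>i\<in>I. indicator (A i) (Y i) :: ennreal)"
        using fin by (subst indicator_PiE_prod) simp_all
      moreover have "exp ((\<Sum>i\<in>I. Y i * c i) - (\<Sum>i\<in>I. (c i)\<^sup>2)/2) = (\<Prod>i\<in>I. exp (Y i * c i - (c i)\<^sup>2/2))"
        using fin by (simp add: exp_sum[symmetric] sum_subtractf sum_divide_distrib)
      ultimately show "ennreal (exp ((\<Sum>i\<in>I. Y i * c i) - (\<Sum>i\<in>I. (c i)\<^sup>2)/2)) * indicator (Pi\<^sub>E I A) Y = (\<Prod>i\<in>I. ennreal (exp (Y i * c i - (c i)\<^sup>2/2)) * indicator (A i) (Y i))"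
        by (simp add: prod_ennreal prod.distrib)
    qed
    also have "\<dots> = (\<Prod>i\<in>I. \<integral>\<^sup>+x. ennreal (exp (x * c i - (c i)\<^sup>2/2)) * indicator (A i) x \<partial>std_gauss)"
      by (rule G.product_nn_integral_prod[OF fin, where f="\<lambda>i x. ennreal (exp (x * c i - (c i)\<^sup>2/2)) * indicator (A i) x"]) auto
    also have "\<dots> = (\<Prod>i\<in>I. emeasure (M i) (A i))"
      unfolding M_def gauss_shift1 by (intro prod.cong refl) (auto simp: emeasure_density)
    finally show "emeasure ?R (Pi\<^sub>E I A) = (\<Prod>i\<in>I. emeasure (M i) (A i))" .
  qed
  show ?thesis using L R by simp
qed

definition tsym :: "nat \<Rightarrow> nat \<Rightarrow> (nat list \<Rightarrow> real) \<Rightarrow> bool" where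
  "tsym N p h \<longleftrightarrow> (\<forall>xs\<in>tidx N p. \<forall>\<pi>. \<pi> permutes {..<p} \<longrightarrow> h (permute_list \<pi> xs) = h xs)"

lemma finite_tidx[simp]: "finite (tidx N p)"
proof -
  have "tidx N p = {xs. set xs \<subseteq> {..<N} \<and> length xs = p}" unfolding tidx_def by auto
  then show ?thesis by (simp add: finite_lists_length_eq)
qed

lemma permute_tidx: "xs \<in> tidx N p \<Longrightarrow> \<pi> permutes {..<p} \<Longrightarrow> permute_list \<pi> xs \<in> tidx N p"
  unfolding tidx_def by auto

lemma card_perms: "card {\<pi>. \<pi> permutes {..<p::nat}} = fact p"
  by (rule card_permutations) auto

lemma sym_shift:
  assumes "tsym N p h"
  shows "symmetrize N p (restrict (\<lambda>xs. Y xs + h xs) (tidx N p)) = restrict (\<lambda>xs. symmetrize N p Y xs + h xs) (tidx N p)"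
proof (rule ext)
  fix xs
  show "symmetrize N p (restrict (\<lambda>xs. Y xs + h xs) (tidx N p)) xs = restrict (\<lambda>xs. symmetrize N p Y xs + h xs) (tidx N p) xs"
  proof (cases "xs \<in> tidx N p")
    case True
    have "(\<Sum>\<pi>\<in>{\<pi>. \<pi> permutes {..<p}}. restrict (\<lambda>xs. Y xs + h xs) (tidx N p) (permute_list \<pi> xs))
        = (\<Sum>\<pi>\<in>{\<pi>. \<pi> permutes {..<p}}. Y (permute_list \<pi> xs) + h xs)"
      using True assms by (intro sum.cong refl) (auto simp: permute_tidx tsym_def)
    also have "\<dots> = (\<Sum>\<pi>\<in>{\<pi>. \<pi> permutes {..<p}}. Y (permute_list \<pi> xs)) + fact p * h xs"
      by (simp add: sum.distrib card_perms)
    finally show ?thesis using True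
      by (simp add: symmetrize_def field_simps)
  qed (simp add: symmetrize_def)
qed

lemma permute_list_inv:
  assumes "\<pi> permutes {..<length xs}"
  shows "permute_list \<pi> (permute_list (inv \<pi>) xs) = xs"
proof -
  have "permute_list \<pi> (permute_list (inv \<pi>) xs) = permute_list (inv \<pi> \<circ> \<pi>) xs"
    by (rule permute_list_compose[symmetric]) (simp add: assms)
  also have "inv \<pi> \<circ> \<pi> = id" using permutes_inv_o(2)[OF assms] .
  finally show ?thesis by simp
qed

lemma sum_tidx_permute:
  assumes "\<pi> permutes {..<p}"
  shows "(\<Sum>xs\<in>tidx N p. f (permute_list \<pi> xs)) = (\<Sum>xs\<in>tidx N p. f xs)"
proof (rule sum.reindex_bij_witness[where j="permute_list \<pi>" and i="permute_list (inv \<pi>)"])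
  fix xs assume "xs \<in> tidx N p"
  then have l: "length xs = p" by (simp add: tidx_def)
  have pi: "inv \<pi> permutes {..<p}" using assms by (rule permutes_inv)
  show "permute_list (inv \<pi>) (permute_list \<pi> xs) = xs"
  proof -
    have "permute_list (inv \<pi>) (permute_list \<pi> xs) = permute_list (\<pi> \<circ> inv \<pi>) xs"
      by (rule permute_list_compose[symmetric]) (simp add: pi l)
    also have "\<pi> \<circ> inv \<pi> = id" using permutes_inv_o(1)[OF assms] .
    finally show ?thesis by simp
  qed
  show "permute_list \<pi> (permute_list (inv \<pi>) xs) = xs"
    using permute_list_inv[of \<pi> "xs"] assms l by simp
  show "permute_list \<pi> xs \<in> tidx N p" using \<open>xs \<in> tidx N p\<close> assms by (rule permute_tidx)
  show "permute_list (inv \<pi>) xs \<in> tidx N p" using \<open>xs \<in> tidx N p\<close> pi by (rule permute_tidx)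
qed simp

lemma sym_inner:
  assumes "tsym N p h"
  shows "(\<Sum>xs\<in>tidx N p. symmetrize N p Y xs * h xs) = (\<Sum>xs\<in>tidx N p. Y xs * h xs)"
proof -
  have "(\<Sum>xs\<in>tidx N p. symmetrize N p Y xs * h xs)
      = (\<Sum>xs\<in>tidx N p. (1 / fact p) * (\<Sum>\<pi>\<in>{\<pi>. \<pi> permutes {..<p}}. Y (permute_list \<pi> xs) * h (permute_list \<pi> xs)))"
    using assms by (intro sum.cong refl) (auto simp: symmetrize_def tsym_def sum_distrib_right)
  also have "\<dots> = (1 / fact p) * (\<Sum>\<pi>\<in>{\<pi>. \<pi> permutes {..<p}}. \<Sum>xs\<in>tidx N p. Y (permute_list \<pi> xs) * h (permute_list \<pi> xs))"
    by (simp add: sum_distrib_left sum.swap[of _ "tidx N p"])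
  also have "\<dots> = (1 / fact p) * (\<Sum>\<pi>\<in>{\<pi>. \<pi> permutes {..<p}}. \<Sum>xs\<in>tidx N p. Y xs * h xs)"
    apply (rule arg_cong[where f="\<lambda>x. _ * x"])
    apply (rule sum.cong[OF refl])
    apply (rule sum_tidx_permute[where f="\<lambda>xs. Y xs * h xs"])
    by simp
  also have "\<dots> = (\<Sum>xs\<in>tidx N p. Y xs * h xs)"
    by (simp add: card_perms)
  finally show ?thesis .
qed

lemma tsym_tensor_power: "tsym N p (\<lambda>xs. c * tensor_power N p u xs)"
  unfolding tsym_def tensor_power_def
proof (intro ballI allI impI)
  fix xs \<pi> assume xs: "xs \<in> tidx N p" and pi: "\<pi> permutes {..<p}"
  then have l: "length xs = p" by (simp add: tidx_def)
  have "prod_list (map u (permute_list \<pi> xs)) = prod_list (map u xs)"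
    using pi l by (simp flip: prod_mset_prod_list permute_list_map)
  then show "c * restrict (\<lambda>xs. prod_list (map u xs)) (tidx N p) (permute_list \<pi> xs) =
           c * restrict (\<lambda>xs. prod_list (map u xs)) (tidx N p) xs"
    using xs pi permute_tidx by simp
qed

lemma tsym_sum: "(\<And>r. r \<in> R \<Longrightarrow> tsym N p (h r)) \<Longrightarrow> tsym N p (\<lambda>xs. c * (\<Sum>r\<in>R. h r xs))"
  unfolding tsym_def by auto

lemma dTV_density:
  fixes G :: "'a measure" and T :: "'a measure" and S :: "'a \<Rightarrow> 'a" and L :: "'a \<Rightarrow> real"
  assumes G: "prob_space G" and Sm[measurable]: "S \<in> G \<rightarrow>\<^sub>M T"
    and LmT[measurable]: "L \<in> borel_measurable T" and LmG[measurable]: "L \<in> borel_measurable G"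
    and Lnn: "\<And>Y. Y \<in> space G \<Longrightarrow> 0 \<le> L Y"
    and Linv: "\<And>Y. Y \<in> space G \<Longrightarrow> L (S Y) = L Y"
    and Lint: "integrable G L" and L1: "integral\<^sup>L G L = 1"
  shows "dTV (distr G T S) (distr (density G (\<lambda>Y. ennreal (L Y))) T S) = (\<integral>Y. max 0 (1 - L Y) \<partial>G)"
proof -
  interpret G: prob_space G by fact
  let ?g = "\<lambda>Y. max 0 (1 - L Y)"
  have int1: "integrable G (\<lambda>Y. 1 - L Y)" using Lint by auto
  have intg: "integrable G ?g"
    by (rule Bochner_Integration.integrable_bound[of _ "\<lambda>Y. 1 - L Y"]) (auto simp: int1)
  have int0: "integral\<^sup>L G (\<lambda>Y. 1 - L Y) = 0"
    using Lint L1 by (simp add: Bochner_Integration.integral_diff G.prob_space)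
  have diff: "measure (distr G T S) A - measure (distr (density G (\<lambda>Y. ennreal (L Y))) T S) A
      = (\<integral>Y. indicator (S -` A \<inter> space G) Y * (1 - L Y) \<partial>G)" if A: "A \<in> sets T" for A
  proof -
    define B where "B = S -` A \<inter> space G"
    have B[measurable]: "B \<in> sets G" unfolding B_def using A by measurable
    have intB: "integrable G (\<lambda>Y. indicator B Y * L Y)"
      by (rule Bochner_Integration.integrable_bound[of _ L]) (auto simp: Lint Lnn split: split_indicator)
    have "measure (distr G T S) A = measure G B" unfolding B_def by (simp add: measure_distr A)
    also have "\<dots> = (\<integral>Y. indicator B Y \<partial>G)" using B by simp
    finally have 1: "measure (distr G T S) A = (\<integral>Y. indicator B Y \<partial>G)" .
    have "measure (distr (density G (\<lambda>Y. ennreal (L Y))) T S) A = measure (density G (\<lambda>Y. ennreal (L Y))) B"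
      unfolding B_def by (subst measure_distr) (auto simp: A)
    also have "\<dots> = enn2real (\<integral>\<^sup>+Y. ennreal (L Y) * indicator B Y \<partial>G)"
      by (simp add: measure_def emeasure_density)
    also have "\<dots> = enn2real (\<integral>\<^sup>+Y. ennreal (indicator B Y * L Y) \<partial>G)"
      by (intro arg_cong[where f=enn2real] nn_integral_cong) (auto split: split_indicator)
    also have "\<dots> = (\<integral>Y. indicator B Y * L Y \<partial>G)"
      by (rule integral_eq_nn_integral[symmetric]) (auto simp: Lnn)
    finally have 2: "measure (distr (density G (\<lambda>Y. ennreal (L Y))) T S) A = (\<integral>Y. indicator B Y * L Y \<partial>G)" .
    have iB: "integrable G (\<lambda>Y. indicator B Y :: real)"
      by (rule integrable_real_indicator[OF B]) (simp add: G.emeasure_eq_measure)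
    have "(\<integral>Y. indicator B Y * (1 - L Y) \<partial>G) = (\<integral>Y. indicator B Y \<partial>G) - (\<integral>Y. indicator B Y * L Y \<partial>G)"
      unfolding right_diff_distrib mult_1_right by (rule Bochner_Integration.integral_diff[OF iB intB])
    then show ?thesis unfolding 1 2 B_def[symmetric] by simp
  qed
  have le: "\<bar>measure (distr G T S) A - measure (distr (density G (\<lambda>Y. ennreal (L Y))) T S) A\<bar> \<le> (\<integral>Y. ?g Y \<partial>G)"
    if A: "A \<in> sets T" for A
  proof -
    define B where "B = S -` A \<inter> space G"
    have B[measurable]: "B \<in> sets G" unfolding B_def using A by measurable
    have i1: "integrable G (\<lambda>Y. indicator B Y * (1 - L Y))"
      by (rule Bochner_Integration.integrable_bound[of _ "\<lambda>Y. 1 - L Y"]) (auto simp: int1 split: split_indicator)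
    have i2: "integrable G (\<lambda>Y. (1 - indicator B Y) * (1 - L Y))"
      by (rule Bochner_Integration.integrable_bound[of _ "\<lambda>Y. 1 - L Y"]) (auto simp: int1 split: split_indicator)
    have a: "(\<integral>Y. indicator B Y * (1 - L Y) \<partial>G) \<le> (\<integral>Y. ?g Y \<partial>G)"
      by (rule integral_mono[OF i1 intg]) (auto split: split_indicator)
    have "(\<integral>Y. (1 - indicator B Y) * (1 - L Y) \<partial>G) \<le> (\<integral>Y. ?g Y \<partial>G)"
      by (rule integral_mono[OF i2 intg]) (auto split: split_indicator)
    moreover have "(\<integral>Y. (1 - indicator B Y) * (1 - L Y) \<partial>G) = integral\<^sup>L G (\<lambda>Y. 1 - L Y) - (\<integral>Y. indicator B Y * (1 - L Y) \<partial>G)"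
    proof -
      have "(\<integral>Y. (1 - indicator B Y) * (1 - L Y) \<partial>G) = (\<integral>Y. (1 - L Y) - indicator B Y * (1 - L Y) \<partial>G)"
        by (intro Bochner_Integration.integral_cong refl) (simp add: left_diff_distrib)
      also have "\<dots> = integral\<^sup>L G (\<lambda>Y. 1 - L Y) - (\<integral>Y. indicator B Y * (1 - L Y) \<partial>G)"
        by (rule Bochner_Integration.integral_diff[OF int1 i1])
      finally show ?thesis .
    qed
    ultimately have b: "- (\<integral>Y. indicator B Y * (1 - L Y) \<partial>G) \<le> (\<integral>Y. ?g Y \<partial>G)"
      using int0 by simp
    show ?thesis unfolding diff[OF A] B_def[symmetric] using a b by linarith
  qed
  define A0 where "A0 = {w \<in> space T. L w < 1}"
  have A0[measurable]: "A0 \<in> sets T" unfolding A0_def by measurable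
  have eq: "\<bar>measure (distr G T S) A0 - measure (distr (density G (\<lambda>Y. ennreal (L Y))) T S) A0\<bar> = (\<integral>Y. ?g Y \<partial>G)"
  proof -
    have "(\<integral>Y. indicator (S -` A0 \<inter> space G) Y * (1 - L Y) \<partial>G) = (\<integral>Y. ?g Y \<partial>G)"
    proof (rule Bochner_Integration.integral_cong[OF refl])
      fix Y assume Y: "Y \<in> space G"
      then have "S Y \<in> space T" using Sm by (auto simp: measurable_def)
      then show "indicator (S -` A0 \<inter> space G) Y * (1 - L Y) = ?g Y"
        using Y Linv[OF Y] by (auto simp: A0_def split: split_indicator)
    qed
    moreover have "0 \<le> (\<integral>Y. ?g Y \<partial>G)" by (rule integral_nonneg_AE) auto
    ultimately show ?thesis unfolding diff[OF A0] by simp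
  qed
  show ?thesis
    unfolding dTV_def
  proof (rule cSup_eq_maximum)
    show "(\<integral>Y. ?g Y \<partial>G) \<in> (\<lambda>A. \<bar>measure (distr G T S) A - measure (distr (density G (\<lambda>Y. ennreal (L Y))) T S) A\<bar>) ` sets (distr G T S)"
      unfolding sets_distr by (rule image_eqI[where x=A0]) (use eq A0 in simp_all)
  qed (use le in auto)
qed

lemma layer_cake01:
  fixes G :: "'a measure" and L :: "'a \<Rightarrow> real"
  assumes G: "prob_space G" and Lm[measurable]: "L \<in> borel_measurable G"
    and Lnn: "\<And>Y. Y \<in> space G \<Longrightarrow> 0 \<le> L Y"
  shows "(\<integral>Y. max 0 (1 - L Y) \<partial>G) = (LBINT x:{0<..<1}. measure G {Y \<in> space G. L Y < x})"
proof -
  interpret G: prob_space G by fact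
  interpret P: pair_sigma_finite G lborel
..
  define m where "m = (\<lambda>x. measure G {Y \<in> space G. L Y < x})"
  have mono_m: "mono m" unfolding m_def mono_def
    by (auto intro!: G.finite_measure_mono)
  have mm[measurable]: "m \<in> borel_measurable borel" by (rule borel_measurable_mono[OF mono_m])
  have m01: "0 \<le> m x" "m x \<le> 1" for x unfolding m_def by auto
  define K where "K = (\<lambda>Y x. indicator {0<..<1::real} x * (if L Y < x then 1 else 0) :: ennreal)"
  have Km: "case_prod K \<in> borel_measurable (G \<Otimes>\<^sub>M lborel)" unfolding K_def by measurable
  have inner1: "(\<integral>\<^sup>+x. K Y x \<partial>lborel) = ennreal (max 0 (1 - L Y))" if Y: "Y \<in> space G" for Y
  proof -
    have "(\<integral>\<^sup>+x. K Y x \<partial>lborel) = (\<integral>\<^sup>+x. indicator {L Y<..<1} x \<partial>lborel)"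
      unfolding K_def using Lnn[OF Y] by (intro nn_integral_cong) (auto split: split_indicator)
    also have "\<dots> = emeasure lborel {L Y<..<1}" by simp
    also have "\<dots> = ennreal (max 0 (1 - L Y))"
      by (cases "L Y \<le> 1") (auto simp: max_def)
    finally show ?thesis .
  qed
  have inner2: "(\<integral>\<^sup>+Y. K Y x \<partial>G) = ennreal (indicator {0<..<1} x * m x)" for x
  proof -
    have "(\<integral>\<^sup>+Y. K Y x \<partial>G) = (\<integral>\<^sup>+Y. indicator {0<..<1::real} x * indicator {Y \<in> space G. L Y < x} Y \<partial>G)"
      unfolding K_def by (intro nn_integral_cong) (auto split: split_indicator)
    also have "\<dots> = indicator {0<..<1::real} x * emeasure G {Y \<in> space G. L Y < x}"
      by (subst nn_integral_cmult) auto
    also have "\<dots> = ennreal (indicator {0<..<1} x * m x)"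
      unfolding m_def by (simp add: G.emeasure_eq_measure ennreal_mult' split: split_indicator)
    finally show ?thesis .
  qed
  have "(\<integral>Y. max 0 (1 - L Y) \<partial>G) = enn2real (\<integral>\<^sup>+Y. ennreal (max 0 (1 - L Y)) \<partial>G)"
    by (rule integral_eq_nn_integral) auto
  also have "(\<integral>\<^sup>+Y. ennreal (max 0 (1 - L Y)) \<partial>G) = (\<integral>\<^sup>+Y. \<integral>\<^sup>+x. K Y x \<partial>lborel \<partial>G)"
    by (intro nn_integral_cong) (simp add: inner1)
  also have "\<dots> = (\<integral>\<^sup>+x. \<integral>\<^sup>+Y. K Y x \<partial>G \<partial>lborel)"
    by (rule P.Fubini'[OF Km, symmetric])
  also have "\<dots> = (\<integral>\<^sup>+x. ennreal (indicator {0<..<1} x * m x) \<partial>lborel)"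
    by (simp add: inner2)
  also have "enn2real \<dots> = (LBINT x:{0<..<1}. m x)"
    unfolding set_lebesgue_integral_def
    by (subst integral_eq_nn_integral) (auto simp: m01)
  finally show ?thesis unfolding m_def .
qed

lemma tcomp[measurable]: "xs \<in> tidx N p \<Longrightarrow> (\<lambda>Y. Y xs) \<in> borel_measurable (tensor_space N p)"
  unfolding tensor_space_def by (rule measurable_component_singleton)

lemma sets_gauss_tensor[measurable_cong]: "sets (gauss_tensor N p) = sets (tensor_space N p)"
  unfolding gauss_tensor_def tensor_space_def by (intro sets_PiM_cong) auto

lemma prob_gauss_tensor: "prob_space (gauss_tensor N p)"
  unfolding gauss_tensor_def by (intro prob_space_PiM std_gauss_prob)

lemma symmetrize_measurable[measurable]: "symmetrize N p \<in> tensor_space N p \<rightarrow>\<^sub>M tensor_space N p"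
proof -
  have [measurable]: "\<And>\<pi> xs. xs \<in> tidx N p \<Longrightarrow> \<pi> \<in> {\<pi>. \<pi> permutes {..<p}} \<Longrightarrow>
     (\<lambda>Y. Y (permute_list \<pi> xs)) \<in> borel_measurable (PiM (tidx N p) (\<lambda>_. borel))"
    using permute_tidx by (auto intro!: measurable_component_singleton)
  show ?thesis
    unfolding symmetrize_def tensor_space_def
    by (rule measurable_restrict) measurable
qed

lemma symcomp[measurable]: "xs \<in> tidx N p \<Longrightarrow> (\<lambda>Y. symmetrize N p Y xs) \<in> borel_measurable (tensor_space N p)"
  using measurable_compose[OF symmetrize_measurable tcomp] by simp

lemma main_abstract:
  fixes U :: "'u measure" and H :: "'u \<Rightarrow> nat list \<Rightarrow> real" and Bd :: real
  assumes U: "prob_space U"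
    and Hm[measurable]: "\<And>xs. xs \<in> tidx N p \<Longrightarrow> (\<lambda>u. H u xs) \<in> borel_measurable U"
    and Hs: "\<And>u. tsym N p (H u)"
    and Hb: "AE u in U. \<forall>xs\<in>tidx N p. \<bar>H u xs\<bar> \<le> Bd"
  shows "dTV (distr (gauss_tensor N p) (tensor_space N p) (symmetrize N p))
     (distr (gauss_tensor N p \<Otimes>\<^sub>M U) (tensor_space N p) (\<lambda>(Y,u). restrict (\<lambda>xs. symmetrize N p Y xs + H u xs) (tidx N p)))
   = (LBINT x:{0<..<1}. measure (gauss_tensor N p) {Y \<in> space (gauss_tensor N p).
        (\<integral>u. exp ((\<Sum>xs\<in>tidx N p. Y xs * H u xs) - (\<Sum>xs\<in>tidx N p. (H u xs)\<^sup>2)/2) \<partial>U) < x})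
   \<and> (\<forall>Y. 0 < (\<integral>u. exp ((\<Sum>xs\<in>tidx N p. Y xs * H u xs) - (\<Sum>xs\<in>tidx N p. (H u xs)\<^sup>2)/2) \<partial>U))"
proof -
  let ?I = "tidx N p" let ?G = "gauss_tensor N p" let ?T = "tensor_space N p" let ?S = "symmetrize N p"
  define E where "E = (\<lambda>Y u. exp ((\<Sum>xs\<in>?I. Y xs * H u xs) - (\<Sum>xs\<in>?I. (H u xs)\<^sup>2)/2))"
  define Lb where "Lb = (\<lambda>Y. \<integral>u. E Y u \<partial>U)"
  interpret U: prob_space U by fact
  interpret G: prob_space ?G by (rule prob_gauss_tensor)
  interpret GU: pair_prob_space ?G U ..
  have spaceG: "space ?G = space ?T" using sets_eq_imp_space_eq[OF sets_gauss_tensor] .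
  have mE[measurable]: "(\<lambda>(Y,u). E Y u) \<in> borel_measurable (?T \<Otimes>\<^sub>M U)" unfolding E_def by measurable
  have mEu[measurable]: "E Y \<in> borel_measurable U" for Y unfolding E_def by measurable
  have mEG[measurable]: "(\<lambda>Y. E Y u) \<in> borel_measurable ?G" for u unfolding E_def by measurable
  have mSG[measurable]: "?S \<in> ?G \<rightarrow>\<^sub>M ?T" by (simp add: measurable_cong_sets[OF sets_gauss_tensor refl])
  have mLb[measurable]: "Lb \<in> borel_measurable ?T" unfolding Lb_def
    by (rule U.borel_measurable_lebesgue_integral) (use mE in simp)
  have mLbG[measurable]: "Lb \<in> borel_measurable ?G" using mLb by (simp add: measurable_cong_sets[OF sets_gauss_tensor refl])
  have intE: "integrable U (E Y)" for Y
  proof (rule Bochner_Integration.integrable_bound[OF U.integrable_const[of "exp (\<Sum>xs\<in>?I. \<bar>Y xs\<bar> * Bd)"] mEu])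
    show "AE u in U. norm (E Y u) \<le> norm (exp (\<Sum>xs\<in>?I. \<bar>Y xs\<bar> * Bd))"
      using Hb
    proof eventually_elim
      case (elim u)
      have "(\<Sum>xs\<in>?I. Y xs * H u xs) \<le> (\<Sum>xs\<in>?I. \<bar>Y xs\<bar> * Bd)"
      proof (rule sum_mono)
        fix xs assume "xs \<in> ?I"
        then have "\<bar>H u xs\<bar> \<le> Bd" using elim by auto
        then have "\<bar>Y xs\<bar> * \<bar>H u xs\<bar> \<le> \<bar>Y xs\<bar> * Bd" by (rule mult_left_mono) simp
        then show "Y xs * H u xs \<le> \<bar>Y xs\<bar> * Bd"
          by (metis abs_ge_self abs_mult order.trans)
      qed
      moreover have "0 \<le> (\<Sum>xs\<in>?I. (H u xs)\<^sup>2)" by (rule sum_nonneg) simp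
      ultimately show ?case unfolding E_def by simp
    qed
  qed
  have Lbnn: "0 \<le> Lb Y" for Y unfolding Lb_def E_def by (rule integral_nonneg_AE) simp
  have Lbpos: "0 < Lb Y" for Y
  proof (rule ccontr)
    assume "\<not> 0 < Lb Y"
    then have "Lb Y = 0" using Lbnn[of Y] by simp
    then have "AE u in U. E Y u = 0" unfolding Lb_def
      using integral_nonneg_eq_0_iff_AE[OF intE] by (simp add: E_def)
    then have "AE u in U. False" by (simp add: E_def)
    then show False by simp
  qed
  have nnE: "(\<integral>\<^sup>+u. ennreal (E Y u) \<partial>U) = ennreal (Lb Y)" for Y
    unfolding Lb_def by (rule nn_integral_eq_integral[OF intE]) (simp add: E_def)
  have Linv: "Lb (?S Y) = Lb Y" for Y
    unfolding Lb_def E_def using sym_inner[OF Hs] by simp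
  have shift: "distr ?G ?T (\<lambda>Y. restrict (\<lambda>xs. Y xs + H u xs) ?I) = density ?G (\<lambda>Y. ennreal (E Y u))" for u
    unfolding gauss_tensor_def tensor_space_def E_def by (rule gauss_shift_prod) simp
  define f where "f = (\<lambda>(Y,u). restrict (\<lambda>xs. ?S Y xs + H u xs) ?I)"
  have mf[measurable]: "f \<in> ?G \<Otimes>\<^sub>M U \<rightarrow>\<^sub>M ?T"
  proof -
    have "f = (\<lambda>z. restrict (\<lambda>xs. ?S (fst z) xs + H (snd z) xs) ?I)"
      by (auto simp: f_def fun_eq_iff split: prod.split)
    also have "\<dots> \<in> ?G \<Otimes>\<^sub>M U \<rightarrow>\<^sub>M ?T"
      unfolding tensor_space_def[of N p] by (rule measurable_restrict) measurable
    finally show ?thesis .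
  qed
  have fS: "f (Y,u) = ?S (restrict (\<lambda>xs. Y xs + H u xs) ?I)" for Y u
    unfolding f_def using sym_shift[OF Hs] by simp
  have msh[measurable]: "(\<lambda>Y. restrict (\<lambda>xs. Y xs + H u xs) ?I) \<in> ?G \<rightarrow>\<^sub>M ?T" for u
    unfolding tensor_space_def by (rule measurable_restrict) measurable
  have Qrep: "distr (?G \<Otimes>\<^sub>M U) ?T f = distr (density ?G (\<lambda>Y. ennreal (Lb Y))) ?T ?S"
  proof (rule measure_eqI)
    fix A assume "A \<in> sets (distr (?G \<Otimes>\<^sub>M U) ?T f)"
    then have A[measurable]: "A \<in> sets ?T" by simp
    have inner: "(\<integral>\<^sup>+Y. indicator A (f (Y,u)) \<partial>?G) = (\<integral>\<^sup>+Y. ennreal (E Y u) * indicator A (?S Y) \<partial>?G)" for u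
    proof -
      have "(\<integral>\<^sup>+Y. indicator A (f (Y,u)) \<partial>?G) = (\<integral>\<^sup>+Y. indicator A (?S (restrict (\<lambda>xs. Y xs + H u xs) ?I)) \<partial>?G)"
        by (simp add: fS)
      also have "\<dots> = (\<integral>\<^sup>+w. indicator A (?S w) \<partial>distr ?G ?T (\<lambda>Y. restrict (\<lambda>xs. Y xs + H u xs) ?I))"
        by (rule nn_integral_distr[symmetric]) measurable
      also have "\<dots> = (\<integral>\<^sup>+Y. ennreal (E Y u) * indicator A (?S Y) \<partial>?G)"
        unfolding shift by (rule nn_integral_density) simp_all
      finally show ?thesis .
    qed
    have "emeasure (distr (?G \<Otimes>\<^sub>M U) ?T f) A = (\<integral>\<^sup>+x. indicator A x \<partial>distr (?G \<Otimes>\<^sub>M U) ?T f)"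
      by (rule nn_integral_indicator[symmetric]) simp
    also have "\<dots> = (\<integral>\<^sup>+z. indicator A (f z) \<partial>(?G \<Otimes>\<^sub>M U))"
      by (rule nn_integral_distr) measurable
    also have "\<dots> = (\<integral>\<^sup>+u. \<integral>\<^sup>+Y. indicator A (f (Y,u)) \<partial>?G \<partial>U)"
      by (rule GU.nn_integral_snd[symmetric]) measurable
    also have "\<dots> = (\<integral>\<^sup>+u. \<integral>\<^sup>+Y. ennreal (E Y u) * indicator A (?S Y) \<partial>?G \<partial>U)"
      by (simp add: inner)
    also have "\<dots> = (\<integral>\<^sup>+Y. \<integral>\<^sup>+u. ennreal (E Y u) * indicator A (?S Y) \<partial>U \<partial>?G)"
      by (rule GU.Fubini') measurable
    also have "\<dots> = (\<integral>\<^sup>+Y. ennreal (Lb Y) * indicator A (?S Y) \<partial>?G)"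
      by (simp add: nn_integral_multc nnE)
    also have "\<dots> = (\<integral>\<^sup>+w. indicator A (?S w) \<partial>density ?G (\<lambda>Y. ennreal (Lb Y)))"
      by (rule nn_integral_density[symmetric]) simp_all
    also have "\<dots> = (\<integral>\<^sup>+x. indicator A x \<partial>distr (density ?G (\<lambda>Y. ennreal (Lb Y))) ?T ?S)"
      by (rule nn_integral_distr[symmetric]) measurable
    also have "\<dots> = emeasure (distr (density ?G (\<lambda>Y. ennreal (Lb Y))) ?T ?S) A"
      by (rule nn_integral_indicator) simp
    finally show "emeasure (distr (?G \<Otimes>\<^sub>M U) ?T f) A = emeasure (distr (density ?G (\<lambda>Y. ennreal (Lb Y))) ?T ?S) A" .
  qed simp
  have nnLb: "(\<integral>\<^sup>+Y. ennreal (Lb Y) \<partial>?G) = ennreal 1"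
  proof -
    have "(\<integral>\<^sup>+Y. ennreal (Lb Y) \<partial>?G) = emeasure (density ?G (\<lambda>Y. ennreal (Lb Y))) (?S -` space ?T \<inter> space ?G)"
      using measurable_space[OF symmetrize_measurable, of _ N p]
      by (subst emeasure_density) (auto simp: spaceG indicator_def intro!: nn_integral_cong)
    also have "\<dots> = emeasure (distr (density ?G (\<lambda>Y. ennreal (Lb Y))) ?T ?S) (space ?T)"
      by (subst emeasure_distr) auto
    also have "\<dots> = emeasure (distr (?G \<Otimes>\<^sub>M U) ?T f) (space ?T)" by (simp add: Qrep)
    also have "\<dots> = 1"
      using prob_space.emeasure_space_1[OF GU.prob_space_distr[OF mf]] by simp
    finally show ?thesis by simp
  qed
  have intLb: "integrable ?G Lb"
    by (rule integrableI_nn_integral_finite[OF mLbG _ nnLb]) (simp add: Lbnn)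
  have Lb1: "integral\<^sup>L ?G Lb = 1"
    using integral_eq_nn_integral[OF mLbG] nnLb Lbnn by simp
  have "dTV (distr ?G ?T ?S) (distr (?G \<Otimes>\<^sub>M U) ?T f) = (\<integral>Y. max 0 (1 - Lb Y) \<partial>?G)"
    unfolding Qrep
    by (rule dTV_density[OF prob_gauss_tensor _ mLb mLbG Lbnn Linv intLb Lb1])
       (simp add: measurable_cong_sets[OF sets_gauss_tensor refl])
  also have "\<dots> = (LBINT x:{0<..<1}. measure ?G {Y \<in> space ?G. Lb Y < x})"
    by (rule layer_cake01[OF prob_gauss_tensor mLbG Lbnn])
  finally have "dTV (distr ?G ?T ?S) (distr (?G \<Otimes>\<^sub>M U) ?T f) = (LBINT x:{0<..<1}. measure ?G {Y \<in> space ?G. Lb Y < x})" .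
  then show ?thesis using Lbpos unfolding f_def Lb_def E_def by blast
qed

lemma prod_list_measurable:
  fixes N :: nat and xs :: "nat list" and M :: "nat \<Rightarrow> real measure"
  assumes M: "\<And>i. i < N \<Longrightarrow> sets (M i) = sets borel"
  shows "set xs \<subseteq> {..<N} \<Longrightarrow> (\<lambda>u. prod_list (map u xs)) \<in> borel_measurable (PiM {..<N} M)"
proof (induction xs)
  case Nil then show ?case by simp
next
  case (Cons x xs)
  then have x: "x \<in> {..<N}" and xs: "set xs \<subseteq> {..<N}" by auto
  have "x < N" using x by simp
  have ux: "(\<lambda>u. u x) \<in> borel_measurable (PiM {..<N} M)"
    using measurable_component_singleton[OF x, of M] measurable_cong_sets[OF refl M[OF \<open>x < N\<close>], of "PiM {..<N} M"]
    by blast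
  have "(\<lambda>u. u x * prod_list (map u xs)) \<in> borel_measurable (PiM {..<N} M)"
    using ux Cons.IH[OF xs] by (rule borel_measurable_times)
  then show ?case by simp
qed

lemma tp_measurable:
  fixes N p :: nat and xs :: "nat list" and M :: "nat \<Rightarrow> real measure"
  assumes M: "\<And>i. i < N \<Longrightarrow> sets (M i) = sets borel" and xs: "xs \<in> tidx N p"
  shows "(\<lambda>u. tensor_power N p u xs) \<in> borel_measurable (PiM {..<N} M)"
  using prod_list_measurable[OF M, where xs=xs] xs by (simp add: tensor_power_def tidx_def)

lemma prod_list_abs_le:
  assumes "0 \<le> B" "\<forall>x\<in>set xs. \<bar>u x\<bar> \<le> (B::real)"
  shows "\<bar>prod_list (map u xs)\<bar> \<le> B ^ length xs"
  using assms(2)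
proof (induction xs)
  case (Cons x xs)
  then have "\<bar>u x\<bar> * \<bar>prod_list (map u xs)\<bar> \<le> B * B ^ length xs"
    by (intro mult_mono) (auto simp: assms(1))
  then show ?case by (simp add: abs_mult)
qed simp

lemma AE_box:
  assumes "prob_space \<mu>" "sets \<mu> = sets borel" "\<Lambda> \<in> sets borel" "measure \<mu> \<Lambda> = 1"
  shows "AE u in PiM {..<N::nat} (\<lambda>_. \<mu>). \<forall>i\<in>{..<N}. u i \<in> \<Lambda>"
proof (rule eventually_ball_finite)
  interpret prob_space \<mu> by fact
  have "AE x in \<mu>. x \<in> \<Lambda>" by (rule AE_prob_1) (use assms in simp)
  then show "\<forall>i\<in>{..<N}. AE u in PiM {..<N} (\<lambda>_. \<mu>). u i \<in> \<Lambda>"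
    using AE_PiM_component[of "{..<N}" "\<lambda>_. \<mu>"] assms(1) by auto
qed simp

lemma sum_tidx_prod: "(\<Sum>xs\<in>tidx N p. prod_list (map f xs)) = (\<Sum>i<N. f i) ^ p"
  for f :: "nat \<Rightarrow> real"
proof (induction p)
  case 0
  have "tidx N 0 = {[]}" by (auto simp: tidx_def)
  then show ?case by simp
next
  case (Suc p)
  have "(\<Sum>xs\<in>tidx N (Suc p). prod_list (map f xs)) = (\<Sum>(i,ys)\<in>{..<N} \<times> tidx N p. f i * prod_list (map f ys))"
  proof (rule sum.reindex_bij_witness[where i="\<lambda>(i,ys). i#ys" and j="\<lambda>xs. (hd xs, tl xs)"])
    fix a assume "a \<in> {..<N} \<times> tidx N p"
    then show "(case a of (i, ys) \<Rightarrow> i # ys) \<in> tidx N (Suc p)" "(hd (case a of (i, ys) \<Rightarrow> i # ys), tl (case a of (i, ys) \<Rightarrow> i # ys)) = a"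
      by (auto simp: tidx_def)
  next
    fix xs assume "xs \<in> tidx N (Suc p)"
    then obtain x ys where "xs = x # ys" "x < N" "ys \<in> tidx N p" by (cases xs) (auto simp: tidx_def)
    then show "(hd xs, tl xs) \<in> {..<N} \<times> tidx N p" "(case (hd xs, tl xs) of (i, ys) \<Rightarrow> i # ys) = xs"
      "(case (hd xs, tl xs) of (i, ys) \<Rightarrow> f i * prod_list (map f ys)) = prod_list (map f xs)"
      by auto
  qed
  also have "\<dots> = (\<Sum>i<N. \<Sum>ys\<in>tidx N p. f i * prod_list (map f ys))"
    by (rule sum.cartesian_product[symmetric])
  also have "\<dots> = (\<Sum>i<N. f i) * (\<Sum>ys\<in>tidx N p. prod_list (map f ys))"
    by (rule sum_product[symmetric])
  finally show ?case using Suc by simp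
qed

lemma prod_list_mult: "prod_list (map u xs) * prod_list (map v xs) = prod_list (map (\<lambda>i. u i * v i) xs)"
  for u v :: "nat \<Rightarrow> real"
  by (induction xs) (auto simp: algebra_simps)

lemma cpow_identity:
  assumes N: "N \<ge> 1"
  shows "(real N powr (- (real p - 1) / 2))\<^sup>2 * S ^ p = real N * ((1 / real N) * S) ^ p"
proof -
  have Np: "real N > 0" using N by simp
  have a2: "(real N powr (- (real p - 1) / 2))\<^sup>2 = real N powr (- (real p - 1))"
    by (simp add: power2_eq_square powr_add[symmetric])
  have h: "real N powr (- (real p - 1)) * real N ^ p = real N"
    using Np by (simp add: powr_realpow[symmetric] powr_add[symmetric])
  have Npp: "real N ^ p > 0" using Np by simp
  have a3: "real N powr (- (real p - 1)) = real N / real N ^ p"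
    using h Npp by (simp add: eq_divide_eq)
  have "real N * ((1 / real N) * S) ^ p = (real N / real N ^ p) * S ^ p"
    by (simp add: power_mult_distrib power_divide)
  then show ?thesis using a2 a3 by simp
qed

lemma tp_sum_eval: "(\<Sum>xs\<in>tidx N p. g xs (tensor_power N p u xs)) = (\<Sum>xs\<in>tidx N p. g xs (prod_list (map u xs)))"
  by (intro sum.cong refl) (simp add: tensor_power_def)

lemma lin_single:
  "(\<Sum>xs\<in>tidx N p. Y xs * (b * c * tensor_power N p u xs)) = b * (c * (\<Sum>xs\<in>tidx N p. Y xs * prod_list (map u xs)))"
  by (subst tp_sum_eval[where g="\<lambda>xs t. Y xs * (b * c * t)"]) (simp add: sum_distrib_left algebra_simps)

lemma sum_tidx_pp: "(\<Sum>xs\<in>tidx N p. prod_list (map u xs) * prod_list (map v xs)) = (\<Sum>i<N. u i * v i) ^ p"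
  for u v :: "nat \<Rightarrow> real"
  by (simp add: prod_list_mult sum_tidx_prod)

lemma quad_single:
  assumes "N \<ge> 1"
  shows "(\<Sum>xs\<in>tidx N p. (b * (real N powr (- (real p - 1) / 2)) * tensor_power N p u xs)\<^sup>2) / 2
       = b\<^sup>2 * real N / 2 * overlap N u u ^ p"
proof -
  let ?c = "real N powr (- (real p - 1) / 2)"
  have "(\<Sum>xs\<in>tidx N p. (b * ?c * tensor_power N p u xs)\<^sup>2)
      = (\<Sum>xs\<in>tidx N p. (b * ?c)\<^sup>2 * (prod_list (map u xs) * prod_list (map u xs)))"
    by (subst tp_sum_eval[where g="\<lambda>xs t. (b * ?c * t)\<^sup>2"]) (simp add: power2_eq_square algebra_simps)
  also have "\<dots> = (b * ?c)\<^sup>2 * (\<Sum>i<N. u i * u i) ^ p"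
    by (simp add: sum_distrib_left[symmetric] sum_tidx_pp)
  also have "\<dots> = b\<^sup>2 * (?c\<^sup>2 * (\<Sum>i<N. u i * u i) ^ p)"
    by (simp add: power_mult_distrib)
  also have "\<dots> = b\<^sup>2 * real N * overlap N u u ^ p"
    unfolding cpow_identity[OF assms] overlap_def by simp
  finally show ?thesis by simp
qed

lemma lin_multi:
  "(\<Sum>xs\<in>tidx N p. Y xs * (c * (\<Sum>r<k. \<beta>s r * tensor_power N p (us r) xs)))
     = (\<Sum>r<k. \<beta>s r * (c * (\<Sum>xs\<in>tidx N p. Y xs * prod_list (map (us r) xs))))"
proof -
  have "(\<Sum>xs\<in>tidx N p. Y xs * (c * (\<Sum>r<k. \<beta>s r * tensor_power N p (us r) xs)))
      = (\<Sum>xs\<in>tidx N p. \<Sum>r<k. \<beta>s r * (c * (Y xs * prod_list (map (us r) xs))))"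
    by (intro sum.cong refl) (simp add: tensor_power_def sum_distrib_left algebra_simps)
  also have "\<dots> = (\<Sum>r<k. \<beta>s r * (c * (\<Sum>xs\<in>tidx N p. Y xs * prod_list (map (us r) xs))))"
    by (subst sum.swap) (simp add: sum_distrib_left)
  finally show ?thesis .
qed

lemma quad_multi:
  assumes "N \<ge> 1"
  shows "(\<Sum>xs\<in>tidx N p. (real N powr (- (real p - 1) / 2) * (\<Sum>r<k. \<beta>s r * tensor_power N p (us r) xs))\<^sup>2) / 2
       = (\<Sum>r<k. \<Sum>r'<k. \<beta>s r * \<beta>s r' / 2 * real N * overlap N (us r) (us r') ^ p)"
proof -
  let ?c = "real N powr (- (real p - 1) / 2)"
  have "(\<Sum>xs\<in>tidx N p. (?c * (\<Sum>r<k. \<beta>s r * tensor_power N p (us r) xs))\<^sup>2)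
      = (\<Sum>xs\<in>tidx N p. \<Sum>r<k. \<Sum>r'<k. \<beta>s r * \<beta>s r' * ?c\<^sup>2 * (prod_list (map (us r) xs) * prod_list (map (us r') xs)))"
  proof (intro sum.cong refl)
    fix xs assume "xs \<in> tidx N p"
    then have "(?c * (\<Sum>r<k. \<beta>s r * tensor_power N p (us r) xs))\<^sup>2
       = ?c\<^sup>2 * ((\<Sum>r<k. \<beta>s r * prod_list (map (us r) xs)) * (\<Sum>r'<k. \<beta>s r' * prod_list (map (us r') xs)))"
      by (simp add: tensor_power_def power2_eq_square algebra_simps)
    also have "\<dots> = (\<Sum>r<k. \<Sum>r'<k. \<beta>s r * \<beta>s r' * ?c\<^sup>2 * (prod_list (map (us r) xs) * prod_list (map (us r') xs)))"
      by (simp add: sum_product sum_distrib_left algebra_simps)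
    finally show "(?c * (\<Sum>r<k. \<beta>s r * tensor_power N p (us r) xs))\<^sup>2 = \<dots>" .
  qed
  also have "\<dots> = (\<Sum>r<k. \<Sum>r'<k. \<beta>s r * \<beta>s r' * (?c\<^sup>2 * (\<Sum>i<N. us r i * us r' i) ^ p))"
  proof -
    have "(\<Sum>xs\<in>tidx N p. \<Sum>r<k. \<Sum>r'<k. \<beta>s r * \<beta>s r' * ?c\<^sup>2 * (prod_list (map (us r) xs) * prod_list (map (us r') xs)))
       = (\<Sum>r<k. \<Sum>xs\<in>tidx N p. \<Sum>r'<k. \<beta>s r * \<beta>s r' * ?c\<^sup>2 * (prod_list (map (us r) xs) * prod_list (map (us r') xs)))"
      by (rule sum.swap)
    also have "\<dots> = (\<Sum>r<k. \<Sum>r'<k. \<Sum>xs\<in>tidx N p. \<beta>s r * \<beta>s r' * ?c\<^sup>2 * (prod_list (map (us r) xs) * prod_list (map (us r') xs)))"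
      by (intro sum.cong refl) (rule sum.swap)
    also have "\<dots> = (\<Sum>r<k. \<Sum>r'<k. \<beta>s r * \<beta>s r' * (?c\<^sup>2 * (\<Sum>i<N. us r i * us r' i) ^ p))"
      by (intro sum.cong refl) (simp add: sum_distrib_left[symmetric] sum_tidx_pp)
    finally show ?thesis .
  qed
  also have "\<dots> = (\<Sum>r<k. \<Sum>r'<k. \<beta>s r * \<beta>s r' * (real N * overlap N (us r) (us r') ^ p))"
    unfolding cpow_identity[OF assms] overlap_def by simp
  finally have "(\<Sum>xs\<in>tidx N p. (?c * (\<Sum>r<k. \<beta>s r * tensor_power N p (us r) xs))\<^sup>2) / 2
     = (\<Sum>r<k. \<Sum>r'<k. \<beta>s r * \<beta>s r' * (real N * overlap N (us r) (us r') ^ p)) / 2" by simp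
  also have "\<dots> = (\<Sum>r<k. \<Sum>r'<k. \<beta>s r * \<beta>s r' / 2 * real N * overlap N (us r) (us r') ^ p)"
    unfolding sum_divide_distrib by (intro sum.cong refl) simp
  finally show ?thesis .
qed

theorem lemma2:
  fixes p N k :: nat and \<mu>s :: "nat \<Rightarrow> real measure" and \<Lambda>s :: "nat \<Rightarrow> real set"
    and \<beta> :: real and \<beta>s :: "nat \<Rightarrow> real"
  assumes "p \<ge> 2" and "N \<ge> 1" and "k \<ge> 1"
    and "\<And>r. r < k \<Longrightarrow> prob_space (\<mu>s r)"
    and "\<And>r. r < k \<Longrightarrow> sets (\<mu>s r) = sets borel"
    and "\<And>r. r < k \<Longrightarrow> \<Lambda>s r \<in> sets borel"
    and "\<And>r. r < k \<Longrightarrow> bounded (\<Lambda>s r)"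
    and "\<And>r. r < k \<Longrightarrow> measure (\<mu>s r) (\<Lambda>s r) = 1"
    and "\<beta> > 0"
    and "\<And>r. r < k \<Longrightarrow> \<beta>s r > 0"
  shows
    "dTV (distr (gauss_tensor N p) (tensor_space N p) (symmetrize N p))
         (distr (gauss_tensor N p \<Otimes>\<^sub>M PiM {..<N} (\<lambda>_. \<mu>s 0)) (tensor_space N p)
            (\<lambda>(Y, u). restrict (\<lambda>is. symmetrize N p Y is
               + \<beta> * real N powr (- (real p - 1) / 2) * tensor_power N p u is) (tidx N p)))
     = (LBINT x:{0<..<1}. measure (gauss_tensor N p)
          {Y \<in> space (gauss_tensor N p). free_energy N p (\<mu>s 0) \<beta> Y < ln x / real N})
   \<and> dTV (distr (gauss_tensor N p) (tensor_space N p) (symmetrize N p))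
         (distr (gauss_tensor N p \<Otimes>\<^sub>M PiM {..<k} (\<lambda>r. PiM {..<N} (\<lambda>_. \<mu>s r))) (tensor_space N p)
            (\<lambda>(Y, us). restrict (\<lambda>is. symmetrize N p Y is
               + real N powr (- (real p - 1) / 2) * (\<Sum>r<k. \<beta>s r * tensor_power N p (us r) is))
               (tidx N p)))
     = (LBINT x:{0<..<1}. measure (gauss_tensor N p)
          {Y \<in> space (gauss_tensor N p). free_energy_multi N p k \<mu>s \<beta>s Y < ln x / real N})"
proof -
  have k0: "0 < k" using assms(3) by simp
  have Np: "real N > 0" using assms(2) by simp
  have conv: "{Y \<in> space (gauss_tensor N p). F Y < ln x / real N} = {Y \<in> space (gauss_tensor N p). LF Y < x}"
    if x: "x \<in> {0<..<1}" and LFpos: "\<And>Y. 0 < LF Y" and FLF: "\<And>Y. F Y = 1 / real N * ln (LF Y)"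
    for F LF :: "(nat list \<Rightarrow> real) \<Rightarrow> real" and x :: real
  proof -
    have "F Y < ln x / real N \<longleftrightarrow> LF Y < x" for Y
    proof -
      have "F Y < ln x / real N \<longleftrightarrow> ln (LF Y) / real N < ln x / real N" by (simp add: FLF)
      also have "\<dots> \<longleftrightarrow> ln (LF Y) < ln x" using Np by (simp add: divide_less_cancel)
      also have "\<dots> \<longleftrightarrow> LF Y < x" using x LFpos[of Y] by simp
      finally show ?thesis .
    qed
    then show ?thesis by auto
  qed
  let ?c = "real N powr (- (real p - 1) / 2)"
  let ?U1 = "PiM {..<N} (\<lambda>_. \<mu>s 0)"
  have U1: "prob_space ?U1" by (rule prob_space_PiM) (use assms(4) k0 in auto)
  have Hm1: "(\<lambda>u. \<beta> * ?c * tensor_power N p u xs) \<in> borel_measurable ?U1" if "xs \<in> tidx N p" for xs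
    by (rule borel_measurable_times[OF borel_measurable_const tp_measurable]) (use assms(5) k0 that in auto)
  have Hs1: "tsym N p (\<lambda>xs. \<beta> * ?c * tensor_power N p u xs)" for u by (rule tsym_tensor_power)
  obtain M0 where M0: "\<forall>x\<in>\<Lambda>s 0. \<bar>x\<bar> \<le> M0" using assms(7)[OF k0] bounded_real by auto
  define M1 where "M1 = max M0 0"
  have M1: "0 \<le> M1" "\<And>x. x \<in> \<Lambda>s 0 \<Longrightarrow> \<bar>x\<bar> \<le> M1" using M0 by (auto simp: M1_def)
  have AE1: "AE u in ?U1. \<forall>i\<in>{..<N}. u i \<in> \<Lambda>s 0"
    by (rule AE_box) (use assms k0 in auto)
  have Hb1: "AE u in ?U1. \<forall>xs\<in>tidx N p. \<bar>\<beta> * ?c * tensor_power N p u xs\<bar> \<le> \<bar>\<beta> * ?c\<bar> * M1 ^ p"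
    using AE1
  proof eventually_elim
    case (elim u)
    show ?case
    proof
      fix xs assume xs: "xs \<in> tidx N p"
      have "\<bar>prod_list (map u xs)\<bar> \<le> M1 ^ length xs"
        by (rule prod_list_abs_le[OF M1(1)]) (use xs elim M1(2) in \<open>auto simp: tidx_def\<close>)
      then have "\<bar>\<beta> * ?c\<bar> * \<bar>prod_list (map u xs)\<bar> \<le> \<bar>\<beta> * ?c\<bar> * M1 ^ p"
        using xs by (intro mult_left_mono) (auto simp: tidx_def)
      then show "\<bar>\<beta> * ?c * tensor_power N p u xs\<bar> \<le> \<bar>\<beta> * ?c\<bar> * M1 ^ p"
        using xs by (simp add: tensor_power_def abs_mult)
    qed
  qed
  note MA1 = main_abstract[OF U1 Hm1 Hs1 Hb1]
  have LF1: "(\<integral>u. exp ((\<Sum>xs\<in>tidx N p. Y xs * (\<beta> * ?c * tensor_power N p u xs)) - (\<Sum>xs\<in>tidx N p. (\<beta> * ?c * tensor_power N p u xs)\<^sup>2)/2) \<partial>?U1)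
     = (\<integral>\<sigma>. exp (\<beta> * XN N p Y \<sigma> - \<beta>\<^sup>2 * real N / 2 * overlap N \<sigma> \<sigma> ^ p) \<partial>?U1)" for Y
    by (intro Bochner_Integration.integral_cong refl) (subst quad_single[OF assms(2)], simp add: lin_single XN_def)
  define Q1 where "Q1 = distr (gauss_tensor N p \<Otimes>\<^sub>M PiM {..<N} (\<lambda>_. \<mu>s 0)) (tensor_space N p)
            (\<lambda>(Y, u). restrict (\<lambda>is. symmetrize N p Y is
               + \<beta> * real N powr (- (real p - 1) / 2) * tensor_power N p u is) (tidx N p))"
  define RHS1 where "RHS1 = (LBINT x:{0<..<1}. measure (gauss_tensor N p)
          {Y \<in> space (gauss_tensor N p). free_energy N p (\<mu>s 0) \<beta> Y < ln x / real N})"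
  have P1: "dTV (distr (gauss_tensor N p) (tensor_space N p) (symmetrize N p))
         (distr (gauss_tensor N p \<Otimes>\<^sub>M PiM {..<N} (\<lambda>_. \<mu>s 0)) (tensor_space N p)
            (\<lambda>(Y, u). restrict (\<lambda>is. symmetrize N p Y is
               + \<beta> * real N powr (- (real p - 1) / 2) * tensor_power N p u is) (tidx N p)))
     = (LBINT x:{0<..<1}. measure (gauss_tensor N p)
          {Y \<in> space (gauss_tensor N p). free_energy N p (\<mu>s 0) \<beta> Y < ln x / real N})"
  proof -
    have "dTV (distr (gauss_tensor N p) (tensor_space N p) (symmetrize N p)) Q1 = (LBINT x:{0<..<1}. measure (gauss_tensor N p) {Y \<in> space (gauss_tensor N p). (\<integral>u. exp ((\<Sum>xs\<in>tidx N p. Y xs * (\<beta> * ?c * tensor_power N p u xs)) - (\<Sum>xs\<in>tidx N p. (\<beta> * ?c * tensor_power N p u xs)\<^sup>2)/2) \<partial>?U1) < x})"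
      unfolding Q1_def by (rule MA1[THEN conjunct1])
    also have "\<dots> = RHS1"
      unfolding RHS1_def
    proof (rule set_lebesgue_integral_cong, simp, intro allI impI)
    fix x :: real assume x: "x \<in> {0<..<1}"
    show "measure (gauss_tensor N p) {Y \<in> space (gauss_tensor N p).
        (\<integral>u. exp ((\<Sum>xs\<in>tidx N p. Y xs * (\<beta> * ?c * tensor_power N p u xs)) - (\<Sum>xs\<in>tidx N p. (\<beta> * ?c * tensor_power N p u xs)\<^sup>2)/2) \<partial>?U1) < x}
      = measure (gauss_tensor N p) {Y \<in> space (gauss_tensor N p). free_energy N p (\<mu>s 0) \<beta> Y < ln x / real N}"
    proof -
      have FLF1: "free_energy N p (\<mu>s 0) \<beta> Y = 1 / real N * ln (\<integral>u. exp ((\<Sum>xs\<in>tidx N p. Y xs * (\<beta> * ?c * tensor_power N p u xs)) - (\<Sum>xs\<in>tidx N p. (\<beta> * ?c * tensor_power N p u xs)\<^sup>2)/2) \<partial>?U1)" for Y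
        unfolding free_energy_def LF1 ..
      show ?thesis by (subst conv[OF x MA1[THEN conjunct2, rule_format] FLF1]) simp_all
    qed
    qed
    finally show ?thesis unfolding Q1_def RHS1_def .
  qed
  let ?U2 = "PiM {..<k} (\<lambda>r. PiM {..<N} (\<lambda>_. \<mu>s r))"
  have U2: "prob_space ?U2"
    by (rule prob_space_PiM, rule prob_space_PiM) (use assms(4) in auto)
  have Hm2: "(\<lambda>us. ?c * (\<Sum>r<k. \<beta>s r * tensor_power N p (us r) xs)) \<in> borel_measurable ?U2"
    if xs: "xs \<in> tidx N p" for xs
  proof -
    have "(\<lambda>us. tensor_power N p (us r) xs) \<in> borel_measurable ?U2" if r: "r \<in> {..<k}" for r
      using measurable_compose[OF measurable_component_singleton[OF r, of "\<lambda>r. PiM {..<N} (\<lambda>_. \<mu>s r)"]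
          tp_measurable[of N "\<lambda>_. \<mu>s r", OF _ xs]] assms(5) r by auto
    then show ?thesis
      by (intro borel_measurable_times borel_measurable_const borel_measurable_sum) auto
  qed
  have Hs2: "tsym N p (\<lambda>xs. ?c * (\<Sum>r<k. \<beta>s r * tensor_power N p (us r) xs))" for us
    by (rule tsym_sum) (rule tsym_tensor_power)
  have "\<forall>r. \<exists>M. r < k \<longrightarrow> (\<forall>x\<in>\<Lambda>s r. \<bar>x\<bar> \<le> M)" using assms(7) bounded_real by metis
  then obtain Mb where Mb: "\<And>r x. r < k \<Longrightarrow> x \<in> \<Lambda>s r \<Longrightarrow> \<bar>x\<bar> \<le> Mb r" by metis
  define Mc where "Mc = (\<lambda>r. max (Mb r) 0)"
  have Mc: "\<And>r. 0 \<le> Mc r" "\<And>r x. r < k \<Longrightarrow> x \<in> \<Lambda>s r \<Longrightarrow> \<bar>x\<bar> \<le> Mc r"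
    using Mb by (auto simp: Mc_def intro: le_max_iff_disj[THEN iffD2])
  have AE2: "AE us in ?U2. \<forall>r\<in>{..<k}. \<forall>i\<in>{..<N}. us r i \<in> \<Lambda>s r"
  proof (rule eventually_ball_finite)
    show "\<forall>r\<in>{..<k}. AE us in ?U2. \<forall>i\<in>{..<N}. us r i \<in> \<Lambda>s r"
    proof
      fix r assume r: "r \<in> {..<k}"
      have "AE u in PiM {..<N} (\<lambda>_. \<mu>s r). \<forall>i\<in>{..<N}. u i \<in> \<Lambda>s r"
        by (rule AE_box) (use assms r in auto)
      moreover have "\<And>r. r \<in> {..<k} \<Longrightarrow> prob_space (PiM {..<N} (\<lambda>_. \<mu>s r))"
        by (rule prob_space_PiM) (use assms(4) in auto)
      ultimately show "AE us in ?U2. \<forall>i\<in>{..<N}. us r i \<in> \<Lambda>s r"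
        using AE_PiM_component[of "{..<k}" "\<lambda>r. PiM {..<N} (\<lambda>_. \<mu>s r)" r "\<lambda>u. \<forall>i\<in>{..<N}. u i \<in> \<Lambda>s r"] r
        by blast
    qed
  qed simp
  have Hb2: "AE us in ?U2. \<forall>xs\<in>tidx N p. \<bar>?c * (\<Sum>r<k. \<beta>s r * tensor_power N p (us r) xs)\<bar> \<le> \<bar>?c\<bar> * (\<Sum>r<k. \<bar>\<beta>s r\<bar> * Mc r ^ p)"
    using AE2
  proof eventually_elim
    case (elim us)
    show ?case
    proof
      fix xs assume xs: "xs \<in> tidx N p"
      have "\<bar>\<Sum>r<k. \<beta>s r * tensor_power N p (us r) xs\<bar> \<le> (\<Sum>r<k. \<bar>\<beta>s r * tensor_power N p (us r) xs\<bar>)"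
        by (rule sum_abs)
      also have "\<dots> \<le> (\<Sum>r<k. \<bar>\<beta>s r\<bar> * Mc r ^ p)"
      proof (rule sum_mono)
        fix r assume r: "r \<in> {..<k}"
        have "\<bar>prod_list (map (us r) xs)\<bar> \<le> Mc r ^ length xs"
          by (rule prod_list_abs_le[OF Mc(1)]) (use xs elim Mc(2) r in \<open>auto simp: tidx_def\<close>)
        then have "\<bar>\<beta>s r\<bar> * \<bar>prod_list (map (us r) xs)\<bar> \<le> \<bar>\<beta>s r\<bar> * Mc r ^ p"
          using xs by (intro mult_left_mono) (auto simp: tidx_def)
        then show "\<bar>\<beta>s r * tensor_power N p (us r) xs\<bar> \<le> \<bar>\<beta>s r\<bar> * Mc r ^ p"
          using xs by (simp add: tensor_power_def abs_mult)
      qed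
      finally show "\<bar>?c * (\<Sum>r<k. \<beta>s r * tensor_power N p (us r) xs)\<bar> \<le> \<bar>?c\<bar> * (\<Sum>r<k. \<bar>\<beta>s r\<bar> * Mc r ^ p)"
        by (simp add: abs_mult mult_left_mono)
    qed
  qed
  note MA2 = main_abstract[OF U2 Hm2 Hs2 Hb2]
  have LF2: "(\<integral>us. exp ((\<Sum>xs\<in>tidx N p. Y xs * (?c * (\<Sum>r<k. \<beta>s r * tensor_power N p (us r) xs)))
        - (\<Sum>xs\<in>tidx N p. (?c * (\<Sum>r<k. \<beta>s r * tensor_power N p (us r) xs))\<^sup>2)/2) \<partial>?U2)
     = (\<integral>\<sigma>s. exp ((\<Sum>r<k. \<beta>s r * XN N p Y (\<sigma>s r))
      - (\<Sum>r<k. \<Sum>r'<k. \<beta>s r * \<beta>s r' / 2 * real N * overlap N (\<sigma>s r) (\<sigma>s r') ^ p)) \<partial>?U2)" for Y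
    by (intro Bochner_Integration.integral_cong refl) (subst quad_multi[OF assms(2)], simp add: lin_multi XN_def)
  define Q2 where "Q2 = distr (gauss_tensor N p \<Otimes>\<^sub>M PiM {..<k} (\<lambda>r. PiM {..<N} (\<lambda>_. \<mu>s r))) (tensor_space N p)
            (\<lambda>(Y, us). restrict (\<lambda>is. symmetrize N p Y is
               + real N powr (- (real p - 1) / 2) * (\<Sum>r<k. \<beta>s r * tensor_power N p (us r) is))
               (tidx N p))"
  define RHS2 where "RHS2 = (LBINT x:{0<..<1}. measure (gauss_tensor N p)
          {Y \<in> space (gauss_tensor N p). free_energy_multi N p k \<mu>s \<beta>s Y < ln x / real N})"
  have P2: "dTV (distr (gauss_tensor N p) (tensor_space N p) (symmetrize N p))
         (distr (gauss_tensor N p \<Otimes>\<^sub>M PiM {..<k} (\<lambda>r. PiM {..<N} (\<lambda>_. \<mu>s r))) (tensor_space N p)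
            (\<lambda>(Y, us). restrict (\<lambda>is. symmetrize N p Y is
               + real N powr (- (real p - 1) / 2) * (\<Sum>r<k. \<beta>s r * tensor_power N p (us r) is))
               (tidx N p)))
     = (LBINT x:{0<..<1}. measure (gauss_tensor N p)
          {Y \<in> space (gauss_tensor N p). free_energy_multi N p k \<mu>s \<beta>s Y < ln x / real N})"
  proof -
    have "dTV (distr (gauss_tensor N p) (tensor_space N p) (symmetrize N p)) Q2 = (LBINT x:{0<..<1}. measure (gauss_tensor N p) {Y \<in> space (gauss_tensor N p). (\<integral>us. exp ((\<Sum>xs\<in>tidx N p. Y xs * (?c * (\<Sum>r<k. \<beta>s r * tensor_power N p (us r) xs)))
        - (\<Sum>xs\<in>tidx N p. (?c * (\<Sum>r<k. \<beta>s r * tensor_power N p (us r) xs))\<^sup>2)/2) \<partial>?U2) < x})"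
      unfolding Q2_def by (rule MA2[THEN conjunct1])
    also have "\<dots> = RHS2"
      unfolding RHS2_def
    proof (rule set_lebesgue_integral_cong, simp, intro allI impI)
    fix x :: real assume x: "x \<in> {0<..<1}"
    show "measure (gauss_tensor N p) {Y \<in> space (gauss_tensor N p).
        (\<integral>us. exp ((\<Sum>xs\<in>tidx N p. Y xs * (?c * (\<Sum>r<k. \<beta>s r * tensor_power N p (us r) xs)))
        - (\<Sum>xs\<in>tidx N p. (?c * (\<Sum>r<k. \<beta>s r * tensor_power N p (us r) xs))\<^sup>2)/2) \<partial>?U2) < x}
      = measure (gauss_tensor N p) {Y \<in> space (gauss_tensor N p). free_energy_multi N p k \<mu>s \<beta>s Y < ln x / real N}"
    proof -
      have FLF2: "free_energy_multi N p k \<mu>s \<beta>s Y = 1 / real N * ln (\<integral>us. exp ((\<Sum>xs\<in>tidx N p. Y xs * (?c * (\<Sum>r<k. \<beta>s r * tensor_power N p (us r) xs)))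
        - (\<Sum>xs\<in>tidx N p. (?c * (\<Sum>r<k. \<beta>s r * tensor_power N p (us r) xs))\<^sup>2)/2) \<partial>?U2)" for Y
        unfolding free_energy_multi_def LF2 ..
      show ?thesis by (subst conv[OF x MA2[THEN conjunct2, rule_format] FLF2]) simp_all
    qed
    qed
    finally show ?thesis unfolding Q2_def RHS2_def .
  qed
  show ?thesis using P1 P2 by simp
qed

end
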